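(* Let $1\le p\le\infty$, $\mathbb{D}=\{z\in\mathbb{C}:|z|<1\}$, $a\in\mathbb{D}$, and $T_a(z)=\frac{z-a}{1-\overline{a}z}$. Then $T_a:(\mathbb{D},b_{\mathbb{D},p})\to(\mathbb{D},b_{\mathbb{D},p})$ is $L$-bilipschitz with $L=\frac{1+|a|}{1-|a|}$, i.e. for all $z_1,z_2\in\mathbb{D}$, \[ \frac{1-|a|}{1+|a|}\,b_{\mathbb{D},p}(z_1,z_2)\le b_{\mathbb{D},p}(T_a(z_1),T_a(z_2))\le\frac{1+|a|}{1-|a|}\,b_{\mathbb{D},p}(z_1,z_2). \]
   Context: For $z_1,z_2\in\mathbb{D}$ and $1\le p<\infty$, $b_{\mathbb{D},p}(z_1,z_2)=\sup_{z\in\partial\mathbb{D}}\frac{|z_1-z_2|}{\sqrt[p]{|z_1-z|^p+|z-z_2|^p}}$, and $b_{\mathbb{D},\infty}(z_1,z_2)=\sup_{z\in\partial\mathbb{D}}\frac{|z_1-z_2|}{\max\{|z_1-z|,|z_2-z|\}}$. *)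

theory Defs
  imports "HOL-Analysis.Analysis" "HOL-Library.Extended_Real"
begin

definition unit_disk :: "complex set" where
  "unit_disk = ball 0 1"

definition b_disk :: "ereal \<Rightarrow> complex \<Rightarrow> complex \<Rightarrow> real" where
  "b_disk p z1 z2 =
     (if p = \<infinity> then
        (SUP z\<in>sphere (0::complex) 1. cmod (z1 - z2) / max (cmod (z1 - z)) (cmod (z2 - z)))
      else
        (SUP z\<in>sphere (0::complex) 1.
           cmod (z1 - z2) / ((cmod (z1 - z) powr real_of_ereal p + cmod (z - z2) powr real_of_ereal p)
                              powr (1 / real_of_ereal p))))"

definition moebius_T :: "complex \<Rightarrow> complex \<Rightarrow> complex" where
  "moebius_T a z = (z - a) / (1 - cnj a * z)"

end

theory Submission
  imports Defs
begin

definition Nf :: "ereal \<Rightarrow> real \<Rightarrow> real \<Rightarrow> real" where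
  "Nf p X Y = (if p = \<infinity> then max X Y
     else (X powr real_of_ereal p + Y powr real_of_ereal p) powr (1 / real_of_ereal p))"

lemma q_ge1: assumes "1 \<le> p" "p \<noteq> \<infinity>" shows "real_of_ereal p \<ge> 1"
  using assms by (cases p) auto

lemma b_disk_Nf:
  "b_disk p z1 z2 = (SUP z\<in>sphere 0 1. cmod (z1-z2) / Nf p (cmod (z1-z)) (cmod (z-z2)))"
  unfolding b_disk_def Nf_def
  by (cases "p = \<infinity>") (auto simp: norm_minus_commute intro!: SUP_cong)

lemma Nf_hom:
  assumes "1 \<le> p" "c > 0" "X \<ge> 0" "Y \<ge> 0"
  shows "Nf p (c*X) (c*Y) = c * Nf p X Y"
proof (cases "p = \<infinity>")
  case True then show ?thesis using assms by (simp add: Nf_def max_mult_distrib_left)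
next
  case False
  define q where "q = real_of_ereal p"
  have q: "q \<ge> 1" using q_ge1[OF assms(1) False] q_def by simp
  have "(c*X) powr q + (c*Y) powr q = c powr q * (X powr q + Y powr q)"
    using assms by (simp add: powr_mult distrib_left)
  moreover have "(c powr q * (X powr q + Y powr q)) powr (1/q) = c * (X powr q + Y powr q) powr (1/q)"
    using assms q by (simp add: powr_mult powr_powr)
  ultimately show ?thesis using False by (simp add: Nf_def q_def)
qed

lemma Nf_mono:
  assumes "1 \<le> p" "0 \<le> X" "X \<le> X'" "0 \<le> Y" "Y \<le> Y'"
  shows "Nf p X Y \<le> Nf p X' Y'"
proof (cases "p = \<infinity>")
  case True then show ?thesis using assms by (auto simp: Nf_def intro: max.coboundedI1 max.coboundedI2 order_trans)
next
  case False
  define q where "q = real_of_ereal p"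
  have q: "q \<ge> 1" using q_ge1[OF assms(1) False] q_def by simp
  have "X powr q + Y powr q \<le> X' powr q + Y' powr q"
    using assms q by (intro add_mono powr_mono2) auto
  then have "(X powr q + Y powr q) powr (1/q) \<le> (X' powr q + Y' powr q) powr (1/q)"
    using q by (intro powr_mono2) auto
  then show ?thesis using False by (simp add: Nf_def q_def)
qed

lemma Nf_ge:
  assumes "1 \<le> p" "0 \<le> X" "0 \<le> Y"
  shows "X \<le> Nf p X Y"
proof (cases "p = \<infinity>")
  case True then show ?thesis using assms by (auto simp: Nf_def intro: max.coboundedI1 max.coboundedI2 order_trans)
next
  case False
  define q where "q = real_of_ereal p"
  have q: "q \<ge> 1" using q_ge1[OF assms(1) False] q_def by simp
  have "X = (X powr q) powr (1/q)" using q assms by (simp add: powr_powr)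
  also have "\<dots> \<le> (X powr q + Y powr q) powr (1/q)"
    using q by (intro powr_mono2) auto
  finally show ?thesis using False by (simp add: Nf_def q_def)
qed

lemma den_bounds:
  assumes "cmod a < 1" "cmod z \<le> 1"
  shows "1 - cmod a \<le> cmod (1 - cnj a * z)" "cmod (1 - cnj a * z) \<le> 1 + cmod a"
proof -
  have n: "cmod (cnj a * z) \<le> cmod a" using assms
    by (simp add: norm_mult mult_left_le)
  have "1 - cmod (cnj a * z) \<le> cmod (1 - cnj a * z)"
    using norm_triangle_ineq2[of 1 "cnj a * z"] by simp
  then show "1 - cmod a \<le> cmod (1 - cnj a * z)" using n by linarith
  have "cmod (1 - cnj a * z) \<le> 1 + cmod (cnj a * z)"
    using norm_triangle_ineq4[of 1 "cnj a * z"] by simp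
  then show "cmod (1 - cnj a * z) \<le> 1 + cmod a" using n by linarith
qed

lemma T_diff:
  assumes "1 - cnj a * z \<noteq> 0" "1 - cnj a * w \<noteq> 0"
  shows "moebius_T a z - moebius_T a w = (z - w) * (1 - cnj a * a) / ((1 - cnj a * z) * (1 - cnj a * w))"
  unfolding moebius_T_def using assms by (simp add: field_simps)

lemma T_sphere:
  assumes "cmod a < 1" "cmod z = 1"
  shows "cmod (moebius_T a z) = 1"
proof -
  have "1 - cnj a * z = z * cnj (z - a)"
    using assms by (simp add: algebra_simps complex_norm_square[symmetric])
  then have "cmod (1 - cnj a * z) = cmod (z - a)" using assms by (simp add: norm_mult del: complex_cnj_diff)
  moreover have "z \<noteq> a" using assms by auto
  ultimately show ?thesis by (simp add: moebius_T_def norm_divide)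
qed

lemma cmod_1_minus_aa: "cmod a < 1 \<Longrightarrow> cmod (1 - cnj a * a) = 1 - cmod a ^ 2"
proof -
  assume a: "cmod a < 1"
  have "cnj a * a = complex_of_real (cmod a ^ 2)"
    by (metis complex_norm_square mult.commute of_real_power)
  then have "1 - cnj a * a = complex_of_real (1 - cmod a ^ 2)" by (simp del: of_real_power)
  moreover have "cmod a ^ 2 < 1" using a by (simp add: power_less_one_iff abs_square_less_1)
  ultimately show ?thesis
    by (metis (no_types) abs_of_pos diff_gt_0_iff_gt norm_of_real)
qed

lemma T_image:
  assumes "cmod a < 1"
  shows "moebius_T a ` sphere 0 1 = sphere 0 1"
proof
  show "moebius_T a ` sphere 0 1 \<subseteq> sphere 0 1" using T_sphere[OF assms] by auto
  show "sphere 0 1 \<subseteq> moebius_T a ` sphere 0 1"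
  proof
    fix w :: complex assume w: "w \<in> sphere 0 1"
    have ma: "cmod (-a) < 1" using assms by simp
    have z: "moebius_T (-a) w \<in> sphere 0 1" using T_sphere[OF ma] w by simp
    have D: "1 + cnj a * w \<noteq> 0" using den_bounds(1)[OF ma, of w] w assms by auto
    have E: "1 - cnj a * a \<noteq> 0"
    proof
      assume "1 - cnj a * a = 0"
      then have "1 - cmod a ^ 2 = 0" using cmod_1_minus_aa[OF assms] by simp
      moreover have "cmod a ^ 2 < 1" using assms by (simp add: abs_square_less_1)
      ultimately show False by simp
    qed
    define u where "u = (w + a) / (1 + cnj a * w)"
    have u: "moebius_T (-a) w = u" by (simp add: moebius_T_def u_def)
    have n1: "u - a = w * (1 - cnj a * a) / (1 + cnj a * w)"
      using D unfolding u_def by (simp add: field_simps)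
    have n2: "1 - cnj a * u = (1 - cnj a * a) / (1 + cnj a * w)"
      using D unfolding u_def by (simp add: field_simps)
    have "moebius_T a u = w"
      unfolding moebius_T_def n1 n2 using D E by simp
    then have "moebius_T a (moebius_T (-a) w) = w" using u by simp
    then show "w \<in> moebius_T a ` sphere 0 1" using z by (metis image_eqI)
  qed
qed


lemma T_norm_diff:
  assumes "cmod a < 1" "cmod z \<le> 1" "cmod w \<le> 1"
  shows "cmod (moebius_T a z - moebius_T a w) =
    cmod (z - w) * (1 - cmod a ^ 2) / (cmod (1 - cnj a * z) * cmod (1 - cnj a * w))"
proof -
  have "1 - cnj a * z \<noteq> 0" "1 - cnj a * w \<noteq> 0"
    using den_bounds(1)[OF assms(1)] assms by (metis diff_gt_0_iff_gt norm_zero not_le)+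
  then show ?thesis using T_diff cmod_1_minus_aa[OF assms(1)]
    by (simp add: norm_mult norm_divide)
qed

lemma pointwise:
  fixes A B C D X Y N N' m M k :: real
  assumes "0 < m" "m \<le> A" "A \<le> M" "m \<le> B" "B \<le> M" "A * B = m * M" "C > 0"
    "N > 0" "N / M \<le> N'" "N' \<le> N / m" "D \<ge> 0"
  shows "(C / (A * B)) * D / N' \<le> (C / m) * (D / N)" "D / N \<le> (M / C) * ((C / (A * B)) * D / N')"
proof -
  have M0: "M > 0" using assms by linarith
  have N'0: "N' > 0" using assms M0 by (meson divide_pos_pos less_le_trans)
  have "N \<le> M * N'" using assms M0 by (simp add: field_simps)
  moreover have "M * N' * m \<le> N * M" using assms M0 N'0 by (simp add: field_simps)
  ultimately show "(C / (A * B)) * D / N' \<le> (C / m) * (D / N)"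
    using assms M0 N'0
    by (simp add: divide_simps) (metis mult_left_mono mult.commute mult.left_commute
         mult_nonneg_nonneg less_imp_le)
  show "D / N \<le> (M / C) * ((C / (A * B)) * D / N')"
    using assms M0 N'0
    by (simp add: divide_simps) (metis mult_left_mono mult.commute mult.left_commute
         mult_nonneg_nonneg less_imp_le)
qed



theorem theorem4p2:
  fixes p :: ereal and a z1 z2 :: complex
  assumes "1 \<le> p" and "a \<in> unit_disk" and "z1 \<in> unit_disk" and "z2 \<in> unit_disk"
  shows "(1 - cmod a) / (1 + cmod a) * b_disk p z1 z2 \<le> b_disk p (moebius_T a z1) (moebius_T a z2)
       \<and> b_disk p (moebius_T a z1) (moebius_T a z2) \<le> (1 + cmod a) / (1 - cmod a) * b_disk p z1 z2"
proof -
  let ?S = "sphere (0::complex) 1"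
  let ?T = "moebius_T a"
  have a1: "cmod a < 1" and c1: "cmod z1 < 1" and c2: "cmod z2 < 1"
    using assms by (auto simp: unit_disk_def)
  define L where "L = (1 + cmod a) / (1 - cmod a)"
  have L0: "L > 0" using a1 norm_ge_zero[of a] unfolding L_def by (intro divide_pos_pos) linarith+
  define G where "G z = cmod (z1 - z2) / Nf p (cmod (z1 - z)) (cmod (z - z2))" for z
  define F where "F z = cmod (?T z1 - ?T z2) / Nf p (cmod (?T z1 - ?T z)) (cmod (?T z - ?T z2))" for z
  have bG: "b_disk p z1 z2 = (SUP z\<in>?S. G z)" unfolding G_def by (rule b_disk_Nf)
  have "b_disk p (?T z1) (?T z2) = (SUP w\<in>?T ` ?S. cmod (?T z1 - ?T z2) / Nf p (cmod (?T z1 - w)) (cmod (w - ?T z2)))"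
    unfolding T_image[OF a1] by (rule b_disk_Nf)
  also have "\<dots> = (SUP z\<in>?S. F z)" unfolding F_def image_image by simp
  finally have bF: "b_disk p (?T z1) (?T z2) = (SUP z\<in>?S. F z)" .
  have Sne: "?S \<noteq> {}" by (metis empty_iff norm_one mem_sphere_0)
  have key: "F z \<le> L * G z \<and> G z \<le> L * F z \<and> G z \<le> cmod (z1 - z2) / (1 - cmod z1)" if z: "z \<in> ?S" for z
  proof -
    have zn: "cmod z = 1" using z by simp
    define A where "A = cmod (1 - cnj a * z1)"
    define B where "B = cmod (1 - cnj a * z2)"
    define C where "C = cmod (1 - cnj a * z)"
    define X where "X = cmod (z1 - z)"
    define Y where "Y = cmod (z - z2)"
    define D where "D = cmod (z1 - z2)"
    define k where "k = 1 - cmod a ^ 2"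
    define m where "m = min A B"
    define M where "M = max A B"
    have k0: "k > 0" using a1 by (simp add: k_def abs_square_less_1)
    have Ab: "1 - cmod a \<le> A" "A \<le> 1 + cmod a" using den_bounds[OF a1, of z1] c1 by (auto simp: A_def)
    have Bb: "1 - cmod a \<le> B" "B \<le> 1 + cmod a" using den_bounds[OF a1, of z2] c2 by (auto simp: B_def)
    have Cb: "1 - cmod a \<le> C" "C \<le> 1 + cmod a" using den_bounds[OF a1, of z] zn by (auto simp: C_def)
    have m0: "m > 0" using Ab Bb a1 by (simp add: m_def)
    have A0: "A > 0" "B > 0" "C > 0" using Ab Bb Cb a1 by auto
    have X0: "X \<ge> 1 - cmod z1"
      using norm_triangle_ineq2[of z z1] zn by (simp add: X_def norm_minus_commute)
    have Xp: "X > 0" using X0 c1 by linarith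
    have Y0: "Y \<ge> 0" by (simp add: Y_def)
    define N where "N = Nf p X Y"
    define N' where "N' = Nf p (X / A) (Y / B)"
    have NX: "X \<le> N" using Nf_ge[OF assms(1)] Xp Y0 by (simp add: N_def)
    have N0: "N > 0" using NX Xp by linarith
    have GG: "G z = D / N" by (simp add: G_def D_def N_def X_def Y_def)
    have "F z = (D * k / (A * B)) / Nf p (X * k / (A * C)) (Y * k / (C * B))"
      unfolding F_def using T_norm_diff[OF a1] c1 c2 zn
      by (simp add: A_def B_def C_def D_def X_def Y_def k_def)
    also have "Nf p (X * k / (A * C)) (Y * k / (C * B)) = Nf p ((k / C) * (X / A)) ((k / C) * (Y / B))"
      by (simp add: field_simps)
    also have "\<dots> = (k / C) * N'"
      unfolding N'_def using A0 k0 Xp Y0 by (intro Nf_hom assms(1)) auto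
    finally have "F z = (D * k / (A * B)) / ((k / C) * N')" .
    then have FF: "F z = (C / (A * B)) * D / N'" using k0 A0 by (simp add: field_simps)
    have "N / M = Nf p ((1/M) * X) ((1/M) * Y)"
      using Nf_hom[OF assms(1), of "1/M" X Y] A0 Xp Y0 by (simp add: N_def M_def)
    also have "\<dots> \<le> N'" unfolding N'_def using A0 Xp Y0
      by (intro Nf_mono assms(1)) (auto simp: M_def divide_simps intro!: mult_left_mono)
    finally have l1: "N / M \<le> N'" .
    have "N' \<le> Nf p ((1/m) * X) ((1/m) * Y)" unfolding N'_def using A0 Xp Y0 m0
      by (intro Nf_mono assms(1)) (auto simp: m_def divide_simps intro!: mult_left_mono)
    also have "\<dots> = N / m"
      using Nf_hom[OF assms(1), of "1/m" X Y] m0 Xp Y0 by (simp add: N_def)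
    finally have l2: "N' \<le> N / m" .
    have AB: "A * B = m * M" by (simp add: m_def M_def min_def max_def)
    have P: "(C / (A * B)) * D / N' \<le> (C / m) * (D / N)" "D / N \<le> (M / C) * ((C / (A * B)) * D / N')"
      using pointwise[OF m0 _ _ _ _ AB A0(3) N0 l1 l2] by (auto simp: m_def M_def D_def)
    have G0: "G z \<ge> 0" using GG N0 by (simp add: D_def)
    have "M > 0" using A0 by (simp add: M_def)
    then have "N' > 0" using l1 N0 by (meson divide_pos_pos less_le_trans)
    then have F0: "F z \<ge> 0" using FF A0 by (simp add: D_def)
    have "C / m \<le> L" unfolding L_def using Cb m0 Ab Bb a1
      by (intro frac_le) (auto simp: m_def)
    then have "F z \<le> L * G z" using P(1) FF GG G0 mult_right_mono by fastforce
    moreover have "M / C \<le> L" unfolding L_def using Cb A0 Ab Bb a1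
      by (intro frac_le) (auto simp: M_def)
    then have "G z \<le> L * F z" using P(2) FF GG F0 mult_right_mono by fastforce
    moreover have "G z \<le> D / (1 - cmod z1)" unfolding GG using X0 NX c1
      by (intro divide_left_mono) (auto simp: D_def)
    ultimately show ?thesis by (simp add: D_def)
  qed
  have bddG: "bdd_above (G ` ?S)" using key by (intro bdd_aboveI2) blast
  have bddF: "bdd_above (F ` ?S)" using key L0
    by (intro bdd_aboveI2[where M = "L * (cmod (z1 - z2) / (1 - cmod z1))"])
       (meson mult_left_mono order_trans less_imp_le)
  have up: "(SUP z\<in>?S. F z) \<le> L * (SUP z\<in>?S. G z)"
  proof (rule cSUP_least[OF Sne])
    fix z assume "z \<in> ?S"
    then have "F z \<le> L * G z" "G z \<le> (SUP z\<in>?S. G z)" using key cSUP_upper[OF _ bddG] by auto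
    then show "F z \<le> L * (SUP z\<in>?S. G z)" using L0 by (meson mult_left_mono order_trans less_imp_le)
  qed
  have lo: "(SUP z\<in>?S. G z) \<le> L * (SUP z\<in>?S. F z)"
  proof (rule cSUP_least[OF Sne])
    fix z assume "z \<in> ?S"
    then have "G z \<le> L * F z" "F z \<le> (SUP z\<in>?S. F z)" using key cSUP_upper[OF _ bddF] by auto
    then show "G z \<le> L * (SUP z\<in>?S. F z)" using L0 by (meson mult_left_mono order_trans less_imp_le)
  qed
  have inv: "(1 - cmod a) / (1 + cmod a) = 1 / L" by (simp add: L_def)
  have "1 / L * (SUP z\<in>?S. G z) \<le> (SUP z\<in>?S. F z)" using lo L0 by (simp add: field_simps)
  then show ?thesis using up unfolding bF bG inv L_def[symmetric] by simp
qed

end
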